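(* Let $X=X_1\times\cdots\times X_n$ be a finite product space, $\theta:X\to\mathbb{R}\cup\{-\infty\}$ a potential function with $Z=\sum_x\exp(\theta(x))>0$, and $p(x)=\exp(\theta(x))/Z$ the Gibbs distribution. Let $\{\gamma_i(x_i)\}_{i,\,x_i\in X_i}$ be i.i.d. random variables following the zero-mean Gumbel distribution. Consider the following procedure (one pass): for $j=1,\dots,n$, with $x_1,\dots,x_{j-1}$ already fixed, set for each $x_j\in X_j$ $$p_j(x_j)=\frac{\exp\big(E_\gamma\big[\max_{x_{j+1},\dots,x_n}\{\theta(x)+\sum_{i=j+1}^n\gamma_i(x_i)\}\big]\big)}{\exp\big(E_\gamma\big[\max_{x_j,\dots,x_n}\{\theta(x)+\sum_{i=j}^n\gamma_i(x_i)\}\big]\big)},$$ set $p_j(r)=1-\sum_{x_j}p_j(x_j)$ for an extra symbol $r$, and sample an element from $p_j(\cdot)$; if $r$ is sampled the pass rejects (and the algorithm restarts with $j=1$), otherwise the sampled $x_j$ is fixed and the iteration continues; if the pass reaches $j=n$ without rejection, it accepts and outputs $(x_1,\dots,x_n)$. Then for every $x\in X$, $$P\big[\text{the algorithm outputs }x\;\big|\;\text{the algorithm accepts}\big]=p(x).$$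
   Context: The zero-mean Gumbel distribution is the distribution with cumulative distribution function $F(t)=\exp(-\exp(-(t+c)))$, where $c$ is the Euler constant. The expectations $E_\gamma$ in $p_j$ are exact expectations over the Gumbel perturbations (the quantities $p_j(\cdot)$ are deterministic given $x_1,\dots,x_{j-1}$); the only randomness in the procedure is the sampling from $p_j(\cdot)$. *)

theory Defs
  imports "HOL-Probability.Probability"
begin

text \<open>Coordinates are indexed by i < n (0-based); an element of X = X_0 x ... x X_(n-1)
  is a function in PiE {..<n} X.  The potential takes values in ereal, with the
  standing assumption that it never takes the value +infinity.\<close>

fun expo :: "ereal \<Rightarrow> real" where
  "expo (ereal r) = exp r"
| "expo PInfty = 0"
| "expo MInfty = 0"

text \<open>Zero-mean Gumbel distribution, given by its CDF F(t) = exp(-exp(-(t+c))).\<close>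
definition gumbel :: "real measure" where
  "gumbel = interval_measure (\<lambda>t. exp (- exp (- (t + euler_mascheroni))))"

text \<open>Index set of the Gumbel perturbations gamma_i(x_i).\<close>
definition gidx :: "nat \<Rightarrow> (nat \<Rightarrow> 'a set) \<Rightarrow> (nat \<times> 'a) set" where
  "gidx n X = Sigma {..<n} X"

definition gumbel_family :: "nat \<Rightarrow> (nat \<Rightarrow> 'a set) \<Rightarrow> (nat \<times> 'a \<Rightarrow> real) measure" where
  "gumbel_family n X = PiM (gidx n X) (\<lambda>_. gumbel)"

definition completions :: "nat \<Rightarrow> (nat \<Rightarrow> 'a set) \<Rightarrow> nat \<Rightarrow> (nat \<Rightarrow> 'a) \<Rightarrow> (nat \<Rightarrow> 'a) set" where
  "completions n X j y = {z \<in> PiE {..<n} X. \<forall>i<j. z i = y i}"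

text \<open>U n X \<theta> j y = E_gamma [ max over completions z of y of
   theta(z) + sum_{i=j}^{n-1} gamma_i(z_i) ]  (an ereal; -infinity iff every completion has
   theta = -infinity, in which case the maximum is identically -infinity).\<close>
definition U :: "nat \<Rightarrow> (nat \<Rightarrow> 'a set) \<Rightarrow> ((nat \<Rightarrow> 'a) \<Rightarrow> ereal) \<Rightarrow> nat \<Rightarrow> (nat \<Rightarrow> 'a) \<Rightarrow> ereal" where
  "U n X \<theta> j y =
     (let F = {z \<in> completions n X j y. \<theta> z \<noteq> -\<infinity>} in
      if F = {} then -\<infinity>
      else ereal (\<integral>\<gamma>. Max ((\<lambda>z. real_of_ereal (\<theta> z) + (\<Sum>i\<in>{j..<n}. \<gamma> (i, z i))) ` F)
                       \<partial>gumbel_family n X))"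

text \<open>p_j(v) for the prefix y (step j, 0-based, choosing coordinate j).\<close>
definition pj :: "nat \<Rightarrow> (nat \<Rightarrow> 'a set) \<Rightarrow> ((nat \<Rightarrow> 'a) \<Rightarrow> ereal) \<Rightarrow> nat \<Rightarrow> (nat \<Rightarrow> 'a) \<Rightarrow> 'a \<Rightarrow> real" where
  "pj n X \<theta> j y v = expo (U n X \<theta> (Suc j) (y(j := v))) / expo (U n X \<theta> j y)"

text \<open>Sampling distribution at step j: Some v stands for v \<in> X j, None for the reject symbol r.\<close>
definition step_pmf :: "nat \<Rightarrow> (nat \<Rightarrow> 'a set) \<Rightarrow> ((nat \<Rightarrow> 'a) \<Rightarrow> ereal) \<Rightarrow> nat \<Rightarrow> (nat \<Rightarrow> 'a) \<Rightarrow> 'a option pmf" where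
  "step_pmf n X \<theta> j y = embed_pmf (\<lambda>w. case w of
       None \<Rightarrow> 1 - (\<Sum>v\<in>X j. pj n X \<theta> j y v)
     | Some v \<Rightarrow> (if v \<in> X j then pj n X \<theta> j y v else 0))"

text \<open>One pass of the procedure, with k steps remaining, currently at step j with prefix y.
  Result None = reject, Some x = accept with output x.\<close>
primrec pass_from :: "nat \<Rightarrow> (nat \<Rightarrow> 'a set) \<Rightarrow> ((nat \<Rightarrow> 'a) \<Rightarrow> ereal) \<Rightarrow> nat \<Rightarrow> nat \<Rightarrow> (nat \<Rightarrow> 'a) \<Rightarrow> (nat \<Rightarrow> 'a) option pmf" where
  "pass_from n X \<theta> 0 j y = return_pmf (Some y)"
| "pass_from n X \<theta> (Suc k) j y =
     bind_pmf (step_pmf n X \<theta> j y)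
       (\<lambda>w. case w of None \<Rightarrow> return_pmf None
                    | Some v \<Rightarrow> pass_from n X \<theta> k (Suc j) (y(j := v)))"

definition pass :: "nat \<Rightarrow> (nat \<Rightarrow> 'a set) \<Rightarrow> ((nat \<Rightarrow> 'a) \<Rightarrow> ereal) \<Rightarrow> (nat \<Rightarrow> 'a) option pmf" where
  "pass n X \<theta> = pass_from n X \<theta> n 0 (\<lambda>_. undefined)"

end

theory Submission
  imports Defs
begin

definition Fg :: "real \<Rightarrow> real" where "Fg t = exp (- exp (- (t + euler_mascheroni)))"

lemma Fg_mono: "x \<le> y \<Longrightarrow> Fg x \<le> Fg y"
  unfolding Fg_def by simp

lemma Fg_cont: "continuous (at_right a) Fg"
  unfolding Fg_def by (intro continuous_intros)

lemma Fg_bot: "(Fg \<longlongrightarrow> 0) at_bot"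
  unfolding Fg_def by real_asymp

lemma Fg_top: "(Fg \<longlongrightarrow> 1) at_top"
  unfolding Fg_def by real_asymp

lemma gumbel_Fg: "gumbel = interval_measure Fg"
  by (simp add: gumbel_def Fg_def[abs_def])

lemma real_distribution_gumbel: "real_distribution gumbel"
  unfolding gumbel_Fg by (rule real_distribution_interval_measure[OF Fg_mono Fg_cont Fg_bot Fg_top])

lemma cdf_gumbel: "cdf gumbel = Fg"
  unfolding gumbel_Fg by (rule cdf_interval_measure[OF Fg_mono Fg_cont Fg_bot])

abbreviation ed :: "real \<Rightarrow> real" where "ed \<equiv> exponential_density 1"

lemma ed_eq: "ed u = (if u < 0 then 0 else exp (- u))"
  by (simp add: exponential_density_def)

lemma ed_nonneg: "0 \<le> ed u" by (simp add: ed_eq)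

lemma Gamma_lborel:
  assumes s: "s > 0"
  shows "has_bochner_integral lborel (\<lambda>u. ed u * u powr (s - 1)) (Gamma s)"
proof -
  have hk: "((\<lambda>t. t powr (s - 1) / exp t) has_integral Gamma s) {0..}"
    by (rule Gamma_integral_real[OF s])
  then have hk1: "((\<lambda>t. if t \<in> {0..} then t powr (s - 1) / exp t else 0) has_integral Gamma s) UNIV"
    by (simp only: has_integral_restrict_UNIV)
  have eq: "(if t \<in> {0..} then t powr (s - 1) / exp t else 0) = ed t * t powr (s - 1)" for t :: real
    by (simp add: ed_eq exp_minus divide_inverse mult.commute)
  have hk2: "((\<lambda>u. ed u * u powr (s - 1)) has_integral Gamma s) UNIV"
    using hk1 unfolding eq .
  have G: "Gamma s > 0" using s by (rule Gamma_real_pos)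
  have nn: "\<And>u. 0 \<le> ed u * u powr (s - 1)" by (simp add: ed_nonneg)
  have "(\<integral>\<^sup>+u. ed u * u powr (s - 1) \<partial>lborel) = ennreal (Gamma s)"
    by (rule nn_integral_has_integral_lborel[OF _ nn hk2]) measurable
  then show ?thesis
    by (intro has_bochner_integral_nn_integral) (auto simp: nn less_imp_le[OF G])
qed
lemma ln_abs_bound:
  fixes u :: real
  assumes u: "u > 0"
  shows "\<bar>ln u\<bar> \<le> 2 * u powr (- 1/2) + u"
proof (cases "u \<ge> 1")
  case True
  have "ln u \<le> u - 1" using ln_le_minus_one[OF u] .
  moreover have "ln u \<ge> 0" using True by simp
  moreover have "u powr (-1/2) \<ge> 0" by simp
  ultimately show ?thesis by linarith
next
  case False
  have sq: "u powr (- 1/2) = 1 / sqrt u"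
    using u by (simp add: powr_minus_divide powr_half_sqrt[symmetric])
  have sp: "sqrt u > 0" using u by simp
  have "ln (1 / sqrt u) \<le> 1 / sqrt u - 1"
    using sp by (intro ln_le_minus_one) simp
  moreover have "ln u = - 2 * ln (1 / sqrt u)"
    using u sp by (simp add: ln_div ln_sqrt)
  moreover have "ln u \<le> 0" using False u by simp
  ultimately have "\<bar>ln u\<bar> \<le> 2 * (1 / sqrt u)" by linarith
  also have "\<dots> = 2 * u powr (- 1/2)" by (simp only: sq)
  finally show ?thesis using u by linarith
qed

lemma integrable_ed_ln: "integrable lborel (\<lambda>u. ed u * ln u)"
proof (rule Bochner_Integration.integrable_bound)
  have i1: "integrable lborel (\<lambda>u. ed u * u powr ((1/2) - 1))"
    using Gamma_lborel[of "1/2"] by (auto simp: has_bochner_integral_iff)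
  have i2: "integrable lborel (\<lambda>u. ed u * u powr (2 - 1))"
    using Gamma_lborel[of 2] by (auto simp: has_bochner_integral_iff)
  show "integrable lborel (\<lambda>u. 2 * (ed u * u powr ((1/2) - 1)) + ed u * u powr (2 - 1))"
    using i1 i2 by auto
  show "(\<lambda>u. ed u * ln u) \<in> borel_measurable lborel" by measurable
  show "AE u in lborel. norm (ed u * ln u) \<le> norm (2 * (ed u * u powr ((1/2) - 1)) + ed u * u powr (2 - 1))"
  proof (rule AE_I2)
    fix u :: real
    show "norm (ed u * ln u) \<le> norm (2 * (ed u * u powr ((1/2) - 1)) + ed u * u powr (2 - 1))"
    proof (cases "u > 0")
      case True
      have e1: "u powr (1/2 - 1) = u powr (- 1/2)" by simp
      have e2: "u powr (2 - 1) = u" using True by simp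
      have "\<bar>ln u\<bar> \<le> 2 * u powr (- 1/2) + u" by (rule ln_abs_bound[OF True])
      then have le: "ed u * \<bar>ln u\<bar> \<le> ed u * (2 * u powr (- 1/2) + u)"
        by (intro mult_left_mono ed_nonneg)
      have nn: "0 \<le> 2 * (ed u * u powr (- 1/2)) + ed u * u"
        using True ed_nonneg[of u] by simp
      have "norm (ed u * ln u) = ed u * \<bar>ln u\<bar>"
        using ed_nonneg[of u] by (simp add: abs_mult)
      also have "\<dots> \<le> 2 * (ed u * u powr (- 1/2)) + ed u * u"
        using le by (simp add: distrib_left)
      also have "\<dots> = norm (2 * (ed u * u powr (1/2 - 1)) + ed u * u powr (2 - 1))"
        unfolding e1 e2 using nn by simp
      finally show ?thesis .
    next
      case False
      then have "ed u * ln u = 0"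
        by (cases "u = 0") (auto simp: ed_eq)
      then show ?thesis by (metis norm_ge_zero norm_zero)
    qed
  qed
qed

lemma Gamma_diff_quot_lim:
  "((\<lambda>h. (Gamma (1 + h) - Gamma 1) / h) \<longlongrightarrow> - euler_mascheroni) (at_right (0::real))"
proof -
  have der: "(Gamma has_field_derivative Gamma 1 * Digamma 1) (at (1::real))"
    by (rule has_field_derivative_Gamma) (auto simp: nonpos_Ints_def)
  then have der': "(Gamma has_field_derivative - euler_mascheroni) (at (1::real))"
    by simp
  have lim: "((\<lambda>h. (Gamma (1 + h) - Gamma 1) / h) \<longlongrightarrow> - euler_mascheroni) (at (0::real))"
    using der' unfolding DERIV_def .
  show ?thesis
    using lim by (rule filterlim_mono) (simp_all add: at_le)
qed

lemma integral_ed_ln_le: "(\<integral>u. ed u * ln u \<partial>lborel) \<le> - euler_mascheroni"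
proof -
  let ?L = "\<integral>u. ed u * ln u \<partial>lborel"
  have bound: "?L \<le> (Gamma (1 + h) - Gamma 1) / h" if h: "h > 0" for h :: real
  proof -
    have b1: "has_bochner_integral lborel (\<lambda>u. ed u * u powr ((1 + h) - 1)) (Gamma (1 + h))"
      using h by (intro Gamma_lborel) simp
    have b2: "has_bochner_integral lborel (\<lambda>u. ed u * u powr (1 - 1)) (Gamma 1)"
      by (intro Gamma_lborel) simp
    have b3: "has_bochner_integral lborel (\<lambda>u. (ed u * u powr ((1 + h) - 1) - ed u * u powr (1 - 1)) / h)
        ((Gamma (1 + h) - Gamma 1) / h)"
      by (intro has_bochner_integral_divide_zero has_bochner_integral_diff b1 b2)
    have "?L \<le> (\<integral>u. (ed u * u powr ((1 + h) - 1) - ed u * u powr (1 - 1)) / h \<partial>lborel)"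
    proof (rule integral_mono)
      show "integrable lborel (\<lambda>u. ed u * ln u)" by (rule integrable_ed_ln)
      show "integrable lborel (\<lambda>u. (ed u * u powr ((1 + h) - 1) - ed u * u powr (1 - 1)) / h)"
        using b3 by (auto simp: has_bochner_integral_iff)
      fix u :: real
      show "ed u * ln u \<le> (ed u * u powr ((1 + h) - 1) - ed u * u powr (1 - 1)) / h"
      proof (cases "u > 0")
        case True
        have "1 + h * ln u \<le> exp (h * ln u)" by (rule exp_ge_add_one_self)
        also have "exp (h * ln u) = u powr h" using True by (simp add: powr_def mult.commute)
        finally have "ln u \<le> (u powr h - 1) / h" using h by (simp add: field_simps)
        then have "ed u * ln u \<le> ed u * ((u powr h - 1) / h)"
          by (intro mult_left_mono ed_nonneg)
        then show ?thesis using True by (simp add: algebra_simps diff_divide_distrib)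
      next
        case False
        then show ?thesis by (auto simp: ed_eq)
      qed
    qed
    also have "\<dots> = (Gamma (1 + h) - Gamma 1) / h"
      using b3 by (simp add: has_bochner_integral_iff)
    finally show ?thesis .
  qed
  have lim': "((\<lambda>h. (Gamma (1 + h) - Gamma 1) / h) \<longlongrightarrow> - euler_mascheroni) (at_right (0::real))"
    by (rule Gamma_diff_quot_lim)
  have ev: "\<forall>\<^sub>F h in at_right 0. ?L \<le> (Gamma (1 + h) - Gamma 1) / h"
    using eventually_at_right_less[of "0::real"] by (rule eventually_mono) (rule bound)
  show ?thesis
    by (rule tendsto_le[OF trivial_limit_at_right_real lim' tendsto_const ev])
qed

definition NE :: "real measure" where "NE = density lborel ed"
definition gg :: "real \<Rightarrow> real" where "gg u = - ln u - euler_mascheroni"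

lemma prob_space_NE: "prob_space NE"
  unfolding NE_def by (rule prob_space_exponential_density) simp

lemma sets_NE[simp, measurable_cong]: "sets NE = sets borel" by (simp add: NE_def)
lemma space_NE[simp]: "space NE = UNIV" by (simp add: NE_def)

lemma gg_meas[measurable]: "gg \<in> borel_measurable borel"
  unfolding gg_def by measurable

lemma distributed_NE: "distributed NE lborel (\<lambda>x. x) ed"
  unfolding distributed_def NE_def
  by (auto simp: distr_id2)

lemma NE_gt: "a \<ge> 0 \<Longrightarrow> measure NE {u. a < u} = exp (- a)"
proof -
  interpret prob_space NE by (rule prob_space_NE)
  assume a: "a \<ge> 0"
  have "\<P>(x in NE. a < x) = exp (- a * 1)"
    by (rule exponential_distributedD_gt[OF distributed_NE a]) simp
  then show ?thesis by simp
qed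

lemma AE_NE_pos: "AE u in NE. 0 < u \<and> u \<noteq> a"
proof -
  have "AE u in lborel. u \<noteq> 0" by (rule AE_lborel_singleton)
  moreover have "AE u in lborel. u \<noteq> a" by (rule AE_lborel_singleton)
  ultimately have "AE u in lborel. 0 < ed u \<longrightarrow> 0 < u \<and> u \<noteq> a"
    by eventually_elim (auto simp: ed_eq split: if_splits)
  then show ?thesis unfolding NE_def
    by (subst AE_density) auto
qed

lemma gumbel_distr: "gumbel = distr NE borel gg"
proof -
  interpret prob_space NE by (rule prob_space_NE)
  have rd: "real_distribution (distr NE borel gg)"
    by (intro real_distribution_distr) simp
  have "cdf (distr NE borel gg) t = Fg t" for t
  proof -
    define a where "a = exp (- (t + euler_mascheroni))"
    have a0: "a > 0" by (simp add: a_def)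
    have "cdf (distr NE borel gg) t = measure NE (gg -` {..t} \<inter> space NE)"
      unfolding cdf_def by (subst measure_distr) auto
    also have "\<dots> = measure NE {u. a < u}"
    proof (rule measure_eq_AE)
      show "AE x in NE. (x \<in> gg -` {..t} \<inter> space NE) = (x \<in> {u. a < u})"
        using AE_NE_pos[of a]
      proof eventually_elim
        case (elim x)
        then have x0: "x > 0" and xa: "x \<noteq> a" by auto
        have "gg x \<le> t \<longleftrightarrow> ln a \<le> ln x"
          unfolding gg_def a_def by auto
        also have "\<dots> \<longleftrightarrow> a \<le> x" using x0 a0 by simp
        finally show ?case using xa by auto
      qed
      show "gg -` {..t} \<inter> space NE \<in> sets NE"
        using measurable_sets[OF gg_meas, of "{..t}"] by simp
    qed auto
    also have "\<dots> = exp (- a)" using a0 by (intro NE_gt) simp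
    also have "\<dots> = Fg t" by (simp add: a_def Fg_def)
    finally show ?thesis .
  qed
  then have "cdf (distr NE borel gg) = Fg" by (rule ext)
  then show ?thesis
    using cdf_unique[OF real_distribution_gumbel rd] cdf_gumbel by simp
qed

lemma gumbel_integrable: "integrable gumbel (\<lambda>x. x)"
  and gumbel_mean_nonneg: "(\<integral>x. x \<partial>gumbel) \<ge> 0"
proof -
  interpret prob_space NE by (rule prob_space_NE)
  have iln: "integrable NE ln"
    unfolding NE_def
    by (subst integrable_density) (auto simp: ed_nonneg integrable_ed_ln)
  have int_ln: "(\<integral>u. ln u \<partial>NE) = (\<integral>u. ed u * ln u \<partial>lborel)"
    unfolding NE_def
    by (subst integral_density) (auto simp: ed_nonneg)
  have igg: "integrable NE gg"
    unfolding gg_def using iln by auto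
  show "integrable gumbel (\<lambda>x. x)"
    unfolding gumbel_distr by (subst integrable_distr_eq) (auto simp: igg)
  have "(\<integral>x. x \<partial>gumbel) = (\<integral>u. gg u \<partial>NE)"
    unfolding gumbel_distr by (subst integral_distr) auto
  also have "\<dots> = - (\<integral>u. ln u \<partial>NE) - euler_mascheroni"
    unfolding gg_def using iln prob_space by simp
  finally show "(\<integral>x. x \<partial>gumbel) \<ge> 0"
    using int_ln integral_ed_ln_le by simp
qed

abbreviation GM :: "'i set \<Rightarrow> ('i \<Rightarrow> real) measure" where
  "GM I \<equiv> PiM I (\<lambda>_. gumbel)"

lemma prob_space_gumbel: "prob_space gumbel"
  using real_distribution_gumbel by (simp add: real_distribution_def)

lemma sets_gumbel[simp, measurable_cong]: "sets gumbel = sets borel"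
  by (simp add: gumbel_def)

lemma space_gumbel[simp]: "space gumbel = UNIV"
  by (simp add: gumbel_def)

lemma coord_meas: "i \<in> I \<Longrightarrow> (\<lambda>\<omega>. \<omega> i) \<in> borel_measurable (GM I)"
  using measurable_component_singleton[of i I "\<lambda>_. gumbel"]
  by (simp add: measurable_def)

lemma prob_space_GM: "prob_space (GM I)"
  by (rule prob_space_PiM) (rule prob_space_gumbel)

lemma distr_GM_component: "i \<in> I \<Longrightarrow> distr (GM I) gumbel (\<lambda>\<omega>. \<omega> i) = gumbel"
  by (rule distr_PiM_component) (auto intro: prob_space_gumbel)

lemma integrable_coord: 
  assumes "i \<in> I" shows "integrable (GM I) (\<lambda>\<omega>. \<omega> i)"
proof -
  have "integrable (distr (GM I) gumbel (\<lambda>\<omega>. \<omega> i)) (\<lambda>x. x)"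
    using assms gumbel_integrable by (simp add: distr_GM_component)
  then show ?thesis
    by (subst (asm) integrable_distr_eq) (auto simp: assms)
qed

lemma integral_coord:
  assumes "i \<in> I" shows "(\<integral>\<omega>. \<omega> i \<partial>GM I) = (\<integral>x. x \<partial>gumbel)"
proof -
  have "(\<integral>x. x \<partial>gumbel) = (\<integral>x. x \<partial>distr (GM I) gumbel (\<lambda>\<omega>. \<omega> i))"
    using assms by (simp add: distr_GM_component)
  also have "\<dots> = (\<integral>\<omega>. \<omega> i \<partial>GM I)"
    by (subst integral_distr) (auto simp: assms)
  finally show ?thesis by simp
qed

lemma indep_coords:
  assumes "I \<noteq> {}"
  shows "prob_space.indep_vars (GM I) (\<lambda>_. gumbel) (\<lambda>i \<omega>. \<omega> i) I"
proof -
  interpret prob_space "GM I" by (rule prob_space_GM)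
  have "distr (GM I) (GM I) (\<lambda>x. \<lambda>i\<in>I. x i) = distr (GM I) (GM I) (\<lambda>x. x)"
    by (rule distr_cong) (auto simp: space_PiM)
  also have "\<dots> = GM I" by simp
  also have "\<dots> = (\<Pi>\<^sub>M i\<in>I. distr (GM I) gumbel (\<lambda>\<omega>. \<omega> i))"
    by (rule PiM_cong) (auto simp: distr_GM_component)
  moreover have rv: "(\<lambda>\<omega>. \<omega> i) \<in> measurable (GM I) gumbel" for i
  proof (cases "i \<in> I")
    case True then show ?thesis by measurable
  next
    case False
    have "(\<lambda>\<omega>. \<omega> i) \<in> measurable (GM I) gumbel \<longleftrightarrow> (\<lambda>\<omega>. undefined) \<in> measurable (GM I) gumbel"
      by (rule measurable_cong) (use False in \<open>auto simp: space_PiM PiE_def extensional_def\<close>)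
    then show ?thesis by simp
  qed
  ultimately show ?thesis
    by (subst indep_vars_iff_distr_eq_PiM[OF assms]) auto
qed

lemma indep_integral:
  fixes f h :: "('i \<Rightarrow> real) \<Rightarrow> real"
  assumes AB: "A \<inter> B = {}" "A \<subseteq> I" "B \<subseteq> I" and ne: "I \<noteq> {}"
    and f: "f \<in> borel_measurable (GM A)" and h: "h \<in> borel_measurable (GM B)"
    and fi: "integrable (GM I) (\<lambda>\<omega>. f (restrict \<omega> A))"
    and hi: "integrable (GM I) (\<lambda>\<omega>. h (restrict \<omega> B))"
  shows "(\<integral>\<omega>. f (restrict \<omega> A) * h (restrict \<omega> B) \<partial>GM I) =
           (\<integral>\<omega>. f (restrict \<omega> A) \<partial>GM I) * (\<integral>\<omega>. h (restrict \<omega> B) \<partial>GM I)"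
    and "integrable (GM I) (\<lambda>\<omega>. f (restrict \<omega> A) * h (restrict \<omega> B))"
proof -
  interpret prob_space "GM I" by (rule prob_space_GM)
  have iv: "indep_var (GM A) (\<lambda>\<omega>. restrict (\<lambda>i. \<omega> i) A) (GM B) (\<lambda>\<omega>. restrict (\<lambda>i. \<omega> i) B)"
    by (rule indep_var_restrict[OF indep_coords[OF ne] AB])
  have iv2: "indep_var borel (f \<circ> (\<lambda>\<omega>. restrict (\<lambda>i. \<omega> i) A)) borel (h \<circ> (\<lambda>\<omega>. restrict (\<lambda>i. \<omega> i) B))"
    by (rule indep_var_compose[OF iv f h])
  then have iv3: "indep_var borel (\<lambda>\<omega>. f (restrict \<omega> A)) borel (\<lambda>\<omega>. h (restrict \<omega> B))"
    by (simp add: comp_def)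
  show "(\<integral>\<omega>. f (restrict \<omega> A) * h (restrict \<omega> B) \<partial>GM I) =
           (\<integral>\<omega>. f (restrict \<omega> A) \<partial>GM I) * (\<integral>\<omega>. h (restrict \<omega> B) \<partial>GM I)"
    by (rule indep_var_lebesgue_integral[OF iv3 fi hi])
  show "integrable (GM I) (\<lambda>\<omega>. f (restrict \<omega> A) * h (restrict \<omega> B))"
    by (rule indep_var_integrable[OF iv3 fi hi])
qed

lemma integrable_Max_fin:
  fixes f :: "'b \<Rightarrow> 'a \<Rightarrow> real"
  assumes "finite S" "S \<noteq> {}" "\<And>v. v \<in> S \<Longrightarrow> integrable M (f v)"
  shows "integrable M (\<lambda>x. Max ((\<lambda>v. f v x) ` S))"
  using assms
proof (induction S rule: finite_ne_induct)
  case (singleton v) then show ?case by simp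
next
  case (insert v S)
  have "integrable M (\<lambda>x. max (f v x) (Max ((\<lambda>v. f v x) ` S)))"
    using insert by (intro integrable_max) auto
  then show ?case using insert by simp
qed

lemma max_indep:
  fixes c :: "'b \<Rightarrow> 'i" and \<Phi> :: "'b \<Rightarrow> ('i \<Rightarrow> real) \<Rightarrow> real"
  assumes fI: "finite I" and fS: "finite S" and ne: "S \<noteq> {}" and cK: "c ` S \<subseteq> K"
    and KJ: "K \<inter> J = {}" and KI: "K \<subseteq> I" and JI: "J \<subseteq> I"
    and \<Phi>m: "\<And>v. v \<in> S \<Longrightarrow> \<Phi> v \<in> borel_measurable (GM J)"
    and \<Phi>i: "\<And>v. v \<in> S \<Longrightarrow> integrable (GM I) (\<lambda>\<omega>. \<Phi> v (restrict \<omega> J))"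
  shows "(\<integral>\<omega>. Max ((\<lambda>v. \<omega> (c v) + \<Phi> v (restrict \<omega> J)) ` S) \<partial>GM I)
     \<ge> (\<integral>\<omega>. Max ((\<lambda>v. \<omega> (c v) + (\<integral>\<omega>'. \<Phi> v (restrict \<omega>' J) \<partial>GM I)) ` S) \<partial>GM I)"
proof -
  interpret P: prob_space "GM I" by (rule prob_space_GM)
  define a where "a v = (\<integral>\<omega>'. \<Phi> v (restrict \<omega>' J) \<partial>GM I)" for v
  define mx where "mx \<omega> = Max ((\<lambda>v. \<omega> (c v) + a v) ` S)" for \<omega> :: "'i \<Rightarrow> real"
  define ind where "ind \<omega> v = (if \<omega> (c v) + a v = mx \<omega> then 1 else 0 :: real)" for \<omega> v
  define cnt where "cnt \<omega> = (\<Sum>u\<in>S. ind \<omega> u)" for \<omega>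
  define w where "w v \<omega> = ind \<omega> v / cnt \<omega>" for v \<omega>
  define LHS where "LHS \<omega> = Max ((\<lambda>v. \<omega> (c v) + \<Phi> v (restrict \<omega> J)) ` S)" for \<omega>
  have cI: "v \<in> S \<Longrightarrow> c v \<in> I" for v using cK KI by auto
  have cKv: "v \<in> S \<Longrightarrow> c v \<in> K" for v using cK by auto
  have ind01: "0 \<le> ind \<omega> v" "ind \<omega> v \<le> 1" for \<omega> v by (auto simp: ind_def)
  have cnt1: "cnt \<omega> \<ge> 1" for \<omega>
  proof -
    have "mx \<omega> \<in> (\<lambda>v. \<omega> (c v) + a v) ` S"
      unfolding mx_def using fS ne by (intro Max_in) auto
    then obtain u where u: "u \<in> S" "\<omega> (c u) + a u = mx \<omega>" by auto
    have "ind \<omega> u \<le> cnt \<omega>" unfolding cnt_def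
      using fS u(1) ind01 by (intro member_le_sum) auto
    then show ?thesis using u by (simp add: ind_def)
  qed
  have w0: "0 \<le> w v \<omega>" for v \<omega> using cnt1[of \<omega>] ind01[of \<omega> v] by (simp add: w_def)
  have w1: "w v \<omega> \<le> 1" for v \<omega> using cnt1[of \<omega>] ind01[of \<omega> v] by (simp add: w_def)
  have wsum: "(\<Sum>v\<in>S. w v \<omega>) = 1" for \<omega>
    using cnt1[of \<omega>] by (simp add: w_def cnt_def sum_divide_distrib[symmetric])
  have wmx: "w v \<omega> * (\<omega> (c v) + a v) = w v \<omega> * mx \<omega>" for v \<omega>
    by (simp add: w_def ind_def)
  have pointwise: "mx \<omega> + (\<Sum>v\<in>S. w v \<omega> * (\<Phi> v (restrict \<omega> J) - a v)) \<le> LHS \<omega>" for \<omega>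
  proof -
    have "mx \<omega> = (\<Sum>v\<in>S. w v \<omega> * (\<omega> (c v) + a v))"
      by (simp add: wmx sum_distrib_right[symmetric] wsum)
    then have "mx \<omega> + (\<Sum>v\<in>S. w v \<omega> * (\<Phi> v (restrict \<omega> J) - a v))
        = (\<Sum>v\<in>S. w v \<omega> * (\<omega> (c v) + \<Phi> v (restrict \<omega> J)))"
      by (simp add: sum.distrib[symmetric] algebra_simps)
    also have "\<dots> \<le> (\<Sum>v\<in>S. w v \<omega> * LHS \<omega>)"
    proof (intro sum_mono mult_left_mono w0)
      fix v assume "v \<in> S"
      then show "\<omega> (c v) + \<Phi> v (restrict \<omega> J) \<le> LHS \<omega>"
        unfolding LHS_def using fS by (intro Max_ge) auto
    qed
    also have "\<dots> = LHS \<omega>" by (simp add: sum_distrib_right[symmetric] wsum)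
    finally show ?thesis .
  qed
  have cmK: "u \<in> S \<Longrightarrow> (\<lambda>\<omega>. \<omega> (c u)) \<in> borel_measurable (GM K)" for u
    by (rule coord_meas[OF cKv])
  have mxK: "mx \<in> borel_measurable (GM K)"
    unfolding mx_def by (intro borel_measurable_Max fS borel_measurable_add cmK) auto
  have indK: "(\<lambda>\<omega>. ind \<omega> v) \<in> borel_measurable (GM K)" if v: "v \<in> S" for v
  proof -
    have "{\<omega> \<in> space (GM K). \<omega> (c v) + a v = mx \<omega>} \<in> sets (GM K)"
      using cmK[OF v] mxK by measurable
    then show ?thesis unfolding ind_def by measurable
  qed
  have wK: "w v \<in> borel_measurable (GM K)" if v: "v \<in> S" for v
  proof -
    have "(\<lambda>\<omega>. cnt \<omega>) \<in> borel_measurable (GM K)"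
      unfolding cnt_def by (intro borel_measurable_sum indK) 
    then show ?thesis unfolding w_def using indK[OF v] by measurable
  qed
  have wrK: "w v (restrict \<omega> K) = w v \<omega>" if v: "v \<in> S" for v \<omega>
  proof -
    have "\<And>u. u \<in> S \<Longrightarrow> restrict \<omega> K (c u) = \<omega> (c u)" using cKv by simp
    then have mxr: "mx (restrict \<omega> K) = mx \<omega>" unfolding mx_def
      by (intro arg_cong[where f=Max] image_cong) auto
    have "\<And>u. u \<in> S \<Longrightarrow> ind (restrict \<omega> K) u = ind \<omega> u"
      unfolding ind_def using mxr cKv by simp
    then show ?thesis unfolding w_def cnt_def using v by (simp cong: sum.cong)
  qed
  have I_ne: "I \<noteq> {}" using ne cI by auto
  have wI: "w v \<in> borel_measurable (GM I)" if v: "v \<in> S" for v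
  proof -
    have "(\<lambda>\<omega>. w v (restrict \<omega> K)) \<in> borel_measurable (GM I)"
      using wK[OF v] apply measurable using KI by auto
    then show ?thesis using wrK[OF v] by simp
  qed
  have wint: "integrable (GM I) (\<lambda>\<omega>. w v (restrict \<omega> K))" if v: "v \<in> S" for v
    unfolding wrK[OF v]
    by (rule P.integrable_const_bound[where B=1]) (use w0 w1 wI[OF v] in auto)
  have indep: "(\<integral>\<omega>. w v \<omega> * \<Phi> v (restrict \<omega> J) \<partial>GM I) = (\<integral>\<omega>. w v \<omega> \<partial>GM I) * a v"
    and indepi: "integrable (GM I) (\<lambda>\<omega>. w v \<omega> * \<Phi> v (restrict \<omega> J))"
    if v: "v \<in> S" for v
  proof -
    have wext: "(\<lambda>\<omega>. w v (restrict \<omega> K)) = w v" by (rule ext) (rule wrK[OF v])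
    note ii = indep_integral[OF KJ KI JI I_ne wK[OF v] \<Phi>m[OF v] wint[OF v] \<Phi>i[OF v]]
    show "(\<integral>\<omega>. w v \<omega> * \<Phi> v (restrict \<omega> J) \<partial>GM I) = (\<integral>\<omega>. w v \<omega> \<partial>GM I) * a v"
      using ii(1) by (simp only: wrK[OF v] a_def)
    show "integrable (GM I) (\<lambda>\<omega>. w v \<omega> * \<Phi> v (restrict \<omega> J))"
      using ii(2) by (simp only: wrK[OF v])
  qed
  have mxi: "integrable (GM I) mx"
    unfolding mx_def
    by (intro integrable_Max_fin fS ne) (auto intro!: Bochner_Integration.integrable_add integrable_coord cI)
  have LHSi: "integrable (GM I) LHS"
    unfolding LHS_def
    by (intro integrable_Max_fin fS ne) (auto intro!: Bochner_Integration.integrable_add integrable_coord cI \<Phi>i)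
  have wi: "integrable (GM I) (w v)" if "v \<in> S" for v
    using wint[OF that] wrK[OF that] by simp
  have sumi: "integrable (GM I) (\<lambda>\<omega>. \<Sum>v\<in>S. w v \<omega> * (\<Phi> v (restrict \<omega> J) - a v))"
    by (intro Bochner_Integration.integrable_sum)
       (auto simp: right_diff_distrib intro!: Bochner_Integration.integrable_diff indepi wi)
  have "(\<integral>\<omega>. mx \<omega> + (\<Sum>v\<in>S. w v \<omega> * (\<Phi> v (restrict \<omega> J) - a v)) \<partial>GM I) \<le> (\<integral>\<omega>. LHS \<omega> \<partial>GM I)"
    by (intro integral_mono Bochner_Integration.integrable_add mxi sumi LHSi pointwise)
  moreover have "(\<integral>\<omega>. mx \<omega> + (\<Sum>v\<in>S. w v \<omega> * (\<Phi> v (restrict \<omega> J) - a v)) \<partial>GM I)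
      = (\<integral>\<omega>. mx \<omega> \<partial>GM I) + (\<Sum>v\<in>S. (\<integral>\<omega>. w v \<omega> * (\<Phi> v (restrict \<omega> J) - a v) \<partial>GM I))"
    using mxi sumi
    by (simp add: Bochner_Integration.integral_sum right_diff_distrib indepi wi)
  moreover have "(\<integral>\<omega>. w v \<omega> * (\<Phi> v (restrict \<omega> J) - a v) \<partial>GM I) = 0" if v: "v \<in> S" for v
    using indep[OF v] indepi[OF v] wi[OF v] by (simp add: right_diff_distrib)
  ultimately show ?thesis
    unfolding LHS_def mx_def a_def by simp
qed

lemma measure_gumbel_atMost: "measure gumbel {..x} = Fg x"
  using cdf_gumbel by (simp add: cdf_def fun_eq_iff)

lemma gumbel_max:
  fixes c :: "'b \<Rightarrow> 'i" and a :: "'b \<Rightarrow> real"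
  assumes fI: "finite I" and fS: "finite S" and ne: "S \<noteq> {}" and inj: "inj_on c S" and cS: "c ` S \<subseteq> I"
  shows "integrable (GM I) (\<lambda>\<omega>. Max ((\<lambda>v. \<omega> (c v) + a v) ` S))"
    and "(\<integral>\<omega>. Max ((\<lambda>v. \<omega> (c v) + a v) ` S) \<partial>GM I) \<ge> ln (\<Sum>v\<in>S. exp (a v))"
proof -
  interpret P: prob_space "GM I" by (rule prob_space_GM)
  interpret G: prob_space gumbel by (rule prob_space_gumbel)
  interpret FP: finite_product_prob_space "\<lambda>_. gumbel" I
    by unfold_locales (auto simp: fI)
  define h where "h \<omega> = Max ((\<lambda>v. \<omega> (c v) + a v) ` S)" for \<omega> :: "'i \<Rightarrow> real"
  have cI: "v \<in> S \<Longrightarrow> c v \<in> I" for v using cS by auto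
  show int: "integrable (GM I) (\<lambda>\<omega>. Max ((\<lambda>v. \<omega> (c v) + a v) ` S))"
    by (intro integrable_Max_fin fS ne) (auto intro!: Bochner_Integration.integrable_add integrable_coord cI)
  have hm: "h \<in> borel_measurable (GM I)"
    unfolding h_def
    by (intro borel_measurable_Max fS borel_measurable_add coord_meas cI)
       (auto simp: fS)
  define Z where "Z = (\<Sum>v\<in>S. exp (a v))"
  have Z0: "Z > 0" unfolding Z_def using fS ne by (intro sum_pos) auto
  define L where "L = ln Z"
  have expL: "exp L = Z" using Z0 by (simp add: L_def)
  define D where "D = distr (GM I) borel h"
  define D' where "D' = distr gumbel borel (\<lambda>x. x + L)"
  have rD: "real_distribution D" unfolding D_def using hm by (intro P.real_distribution_distr) simp
  have rD': "real_distribution D'" unfolding D'_def by (intro G.real_distribution_distr) simp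
  have cdfD: "cdf D t = Fg (t - L)" for t
  proof -
    define A where "A i = (if i \<in> c ` S then {..t - a (the_inv_into S c i)} else UNIV)" for i
    have "cdf D t = measure (GM I) (h -` {..t} \<inter> space (GM I))"
      unfolding cdf_def D_def using hm by (subst measure_distr) auto
    also have "h -` {..t} \<inter> space (GM I) = PiE I A"
    proof (intro set_eqI iffI)
      fix \<omega> assume "\<omega> \<in> h -` {..t} \<inter> space (GM I)"
      then have le: "h \<omega> \<le> t" and sp: "\<omega> \<in> PiE I (\<lambda>_. UNIV)" by (auto simp: space_PiM)
      have "\<forall>v\<in>S. \<omega> (c v) + a v \<le> t" using le fS ne unfolding h_def by simp
      then show "\<omega> \<in> PiE I A" using sp inj by (auto simp: A_def PiE_def Pi_def the_inv_into_f_f)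
    next
      fix \<omega> assume w: "\<omega> \<in> PiE I A"
      have "\<forall>v\<in>S. \<omega> (c v) + a v \<le> t"
      proof
        fix v assume v: "v \<in> S"
        then have "\<omega> (c v) \<in> A (c v)" using w cI by (auto simp: PiE_def)
        then show "\<omega> (c v) + a v \<le> t" using v inj by (auto simp: A_def the_inv_into_f_f)
      qed
      then have "h \<omega> \<le> t" unfolding h_def using fS ne by simp
      then show "\<omega> \<in> h -` {..t} \<inter> space (GM I)" using w by (auto simp: space_PiM PiE_def)
    qed
    also have "measure (GM I) (PiE I A) = (\<Prod>i\<in>I. measure gumbel (A i))"
      by (rule FP.finite_measure_PiM_emb) (auto simp: A_def)
    also have "\<dots> = (\<Prod>i\<in>c ` S. measure gumbel (A i))"
      using cS fI G.prob_space by (intro prod.mono_neutral_right) (auto simp: A_def)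
    also have "\<dots> = (\<Prod>v\<in>S. measure gumbel (A (c v)))"
      using inj by (simp add: prod.reindex)
    also have "\<dots> = (\<Prod>v\<in>S. exp (- (exp (- (t + euler_mascheroni)) * exp (a v))))"
      using inj by (intro prod.cong) (auto simp: A_def the_inv_into_f_f measure_gumbel_atMost
          Fg_def exp_diff exp_minus exp_add field_simps)
    also have "\<dots> = exp (\<Sum>v\<in>S. - (exp (- (t + euler_mascheroni)) * exp (a v)))"
      by (simp add: exp_sum fS)
    also have "(\<Sum>v\<in>S. - (exp (- (t + euler_mascheroni)) * exp (a v))) = - (exp (- (t + euler_mascheroni)) * Z)"
      by (simp add: Z_def sum_distrib_left sum_negf)
    also have "exp (- (exp (- (t + euler_mascheroni)) * Z)) = Fg (t - L)"
      by (simp add: Fg_def expL[symmetric] exp_add[symmetric] exp_diff algebra_simps)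
    finally show ?thesis .
  qed
  have cdfD': "cdf D' t = Fg (t - L)" for t
  proof -
    have "cdf D' t = measure gumbel ((\<lambda>x. x + L) -` {..t} \<inter> space gumbel)"
      unfolding cdf_def D'_def by (subst measure_distr) auto
    also have "(\<lambda>x. x + L) -` {..t} \<inter> space gumbel = {..t - L}" by auto
    finally show ?thesis by (simp add: measure_gumbel_atMost)
  qed
  have DD: "D = D'"
    by (rule cdf_unique[OF rD rD']) (simp add: fun_eq_iff cdfD cdfD')
  have "(\<integral>\<omega>. h \<omega> \<partial>GM I) = (\<integral>x. x \<partial>D)"
    unfolding D_def using hm by (subst integral_distr) auto
  also have "\<dots> = (\<integral>x. x \<partial>D')" by (simp add: DD)
  also have "\<dots> = (\<integral>x. x + L \<partial>gumbel)"
    unfolding D'_def by (subst integral_distr) auto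
  also have "\<dots> = (\<integral>x. x \<partial>gumbel) + L"
    using gumbel_integrable G.prob_space by simp
  finally show "(\<integral>\<omega>. Max ((\<lambda>v. \<omega> (c v) + a v) ` S) \<partial>GM I) \<ge> ln (\<Sum>v\<in>S. exp (a v))"
    using gumbel_mean_nonneg unfolding h_def L_def Z_def by simp
qed

definition Fset :: "nat \<Rightarrow> (nat \<Rightarrow> 'a set) \<Rightarrow> ((nat \<Rightarrow> 'a) \<Rightarrow> ereal) \<Rightarrow> nat \<Rightarrow> (nat \<Rightarrow> 'a) \<Rightarrow> (nat \<Rightarrow> 'a) set" where
  "Fset n X \<theta> j y = {z \<in> completions n X j y. \<theta> z \<noteq> -\<infinity>}"

definition Tval :: "nat \<Rightarrow> ((nat \<Rightarrow> 'a) \<Rightarrow> ereal) \<Rightarrow> nat \<Rightarrow> (nat \<times> 'a \<Rightarrow> real) \<Rightarrow> (nat \<Rightarrow> 'a) \<Rightarrow> real" where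
  "Tval n \<theta> j \<gamma> z = real_of_ereal (\<theta> z) + (\<Sum>i\<in>{j..<n}. \<gamma> (i, z i))"

lemma U_alt: "U n X \<theta> j y = (if Fset n X \<theta> j y = {} then -\<infinity>
   else ereal (\<integral>\<gamma>. Max ((\<lambda>z. Tval n \<theta> j \<gamma> z) ` Fset n X \<theta> j y) \<partial>GM (gidx n X)))"
  by (simp add: U_def Let_def Fset_def Tval_def gumbel_family_def)

lemma expo_inf[simp]: "expo \<infinity> = 0" "expo (-\<infinity>) = 0"
  using expo.simps(2,3) unfolding PInfty_eq_infinity MInfty_eq_minfinity .

lemma expo_nonneg: "0 \<le> expo x"
  by (cases x) auto

lemma Max_UN_fin:
  fixes f :: "'b \<Rightarrow> real"
  assumes fS: "finite S" and neS: "S \<noteq> {}" and fA: "\<And>v. v \<in> S \<Longrightarrow> finite (A v)"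
    and neA: "\<And>v. v \<in> S \<Longrightarrow> A v \<noteq> {}"
  shows "Max (f ` (\<Union>v\<in>S. A v)) = Max ((\<lambda>v. Max (f ` A v)) ` S)"
proof (rule antisym)
  have fin: "finite (\<Union>v\<in>S. A v)" using fS fA by auto
  have ne: "(\<Union>v\<in>S. A v) \<noteq> {}" using neS neA by auto
  let ?R = "Max ((\<lambda>v. Max (f ` A v)) ` S)"
  have "\<forall>z\<in>(\<Union>v\<in>S. A v). f z \<le> ?R"
  proof
    fix z assume "z \<in> (\<Union>v\<in>S. A v)"
    then obtain v where v: "v \<in> S" and z: "z \<in> A v" by auto
    have "f z \<le> Max (f ` A v)" using fA v z by (intro Max_ge) auto
    also have "\<dots> \<le> ?R" using fS v by (intro Max_ge) auto
    finally show "f z \<le> ?R" .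
  qed
  then show "Max (f ` (\<Union>v\<in>S. A v)) \<le> ?R" using fin ne by (simp add: Max_le_iff)
  have "\<forall>v\<in>S. Max (f ` A v) \<le> Max (f ` (\<Union>v\<in>S. A v))"
  proof
    fix v assume v: "v \<in> S"
    have "\<forall>z\<in>A v. f z \<le> Max (f ` (\<Union>v\<in>S. A v))"
      using fin v by (auto intro: Max_ge)
    then show "Max (f ` A v) \<le> Max (f ` (\<Union>v\<in>S. A v))"
      using fA[OF v] neA[OF v] by (simp add: Max_le_iff)
  qed
  then show "?R \<le> Max (f ` (\<Union>v\<in>S. A v))" using fS neS by (simp add: Max_le_iff)
qed

lemma finite_gidx: "(\<And>i. i < n \<Longrightarrow> finite (X i)) \<Longrightarrow> finite (gidx n X)"
  unfolding gidx_def by (intro finite_SigmaI) auto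

lemma finite_Fset: "(\<And>i. i < n \<Longrightarrow> finite (X i)) \<Longrightarrow> finite (Fset n X \<theta> j y)"
  by (rule finite_subset[OF _ finite_PiE[of "{..<n}" X]]) (auto simp: Fset_def completions_def)

lemma Tval_split:
  "j < n \<Longrightarrow> Tval n \<theta> j \<gamma> z = \<gamma> (j, z j) + Tval n \<theta> (Suc j) \<gamma> z"
  by (simp add: Tval_def sum.atLeast_Suc_lessThan)

lemma Fset_Suc_iff:
  "z \<in> Fset n X \<theta> (Suc j) (y(j := v)) \<longleftrightarrow> z \<in> Fset n X \<theta> j y \<and> z j = v"
  unfolding Fset_def completions_def by (auto simp: less_Suc_eq)

lemma step_bound:
  assumes fin: "\<And>i. i < n \<Longrightarrow> finite (X i)" and jn: "j < n" and Fne: "Fset n X \<theta> j y \<noteq> {}"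
  shows "(\<Sum>v\<in>X j. expo (U n X \<theta> (Suc j) (y(j := v)))) \<le> expo (U n X \<theta> j y)"
proof -
  define I where "I = gidx n X"
  have fI: "finite I" unfolding I_def by (rule finite_gidx[OF fin])
  interpret P: prob_space "GM I" by (rule prob_space_GM)
  define FF where "FF v = Fset n X \<theta> (Suc j) (y(j := v))" for v
  define S where "S = {v \<in> X j. FF v \<noteq> {}}"
  have fF: "finite (FF v)" for v unfolding FF_def by (rule finite_Fset[OF fin])
  have fS: "finite S" unfolding S_def using fin[OF jn] by simp
  have FF_iff: "z \<in> FF v \<longleftrightarrow> z \<in> Fset n X \<theta> j y \<and> z j = v" for z v
    unfolding FF_def by (rule Fset_Suc_iff)
  have zPi: "z \<in> PiE {..<n} X" if "z \<in> Fset n X \<theta> j y" for z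
    using that by (auto simp: Fset_def completions_def)
  have Fj: "Fset n X \<theta> j y = (\<Union>v\<in>S. FF v)"
  proof (intro set_eqI iffI)
    fix z assume z: "z \<in> Fset n X \<theta> j y"
    then have "z j \<in> X j" using zPi[OF z] jn by (auto simp: PiE_def)
    moreover have "z \<in> FF (z j)" using z FF_iff by simp
    ultimately show "z \<in> (\<Union>v\<in>S. FF v)" unfolding S_def by auto
  qed (auto simp: FF_iff)
  have Sne: "S \<noteq> {}" using Fne Fj by auto
  define \<Phi> where "\<Phi> v \<omega> = Max ((\<lambda>z. Tval n \<theta> (Suc j) \<omega> z) ` FF v)" for v \<omega>
  define K where "K = {p \<in> I. fst p = j}"
  define J where "J = {p \<in> I. j < fst p}"
  have KJ: "K \<inter> J = {}" and KI: "K \<subseteq> I" and JI: "J \<subseteq> I" by (auto simp: K_def J_def)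
  have cK: "(\<lambda>v. (j, v)) ` S \<subseteq> K" using jn by (auto simp: K_def I_def gidx_def S_def)
  have inJ: "(i, z i) \<in> J" if "z \<in> FF v" "i \<in> {Suc j..<n}" for z v i
  proof -
    have "z \<in> PiE {..<n} X" using that(1) FF_iff zPi by auto
    then show ?thesis using that(2) by (auto simp: J_def I_def gidx_def PiE_def)
  qed
  have inI: "(i, z i) \<in> I" if "z \<in> FF v" "i \<in> {Suc j..<n}" for z v i
    using inJ[OF that] JI by auto
  have Tr: "Tval n \<theta> (Suc j) (restrict \<omega> J) z = Tval n \<theta> (Suc j) \<omega> z" if "z \<in> FF v" for z v \<omega>
    unfolding Tval_def using inJ[OF that] by (intro arg_cong2[where f="(+)"] refl sum.cong) auto
  have \<Phi>r: "\<Phi> v (restrict \<omega> J) = \<Phi> v \<omega>" for v \<omega>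
    unfolding \<Phi>_def by (intro arg_cong[where f=Max] image_cong refl Tr)
  have \<Phi>m: "\<Phi> v \<in> borel_measurable (GM J)" if "v \<in> S" for v
    unfolding \<Phi>_def Tval_def
    by (intro borel_measurable_Max fF borel_measurable_add borel_measurable_const
          borel_measurable_sum coord_meas inJ) auto
  have \<Phi>int: "integrable (GM I) (\<Phi> v)" if "v \<in> S" for v
    unfolding \<Phi>_def Tval_def using that
    by (intro integrable_Max_fin fF)
       (auto simp: S_def intro!: Bochner_Integration.integrable_add Bochner_Integration.integrable_sum
          integrable_coord inI)
  have \<Phi>i: "integrable (GM I) (\<lambda>\<omega>. \<Phi> v (restrict \<omega> J))" if "v \<in> S" for v
    unfolding \<Phi>r using \<Phi>int[OF that] .
  define a where "a v = (\<integral>\<omega>. \<Phi> v \<omega> \<partial>GM I)" for v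
  have decomp: "Max ((\<lambda>z. Tval n \<theta> j \<gamma> z) ` Fset n X \<theta> j y) = Max ((\<lambda>v. \<gamma> (j, v) + \<Phi> v \<gamma>) ` S)" for \<gamma>
  proof -
    have "Max ((\<lambda>z. Tval n \<theta> j \<gamma> z) ` Fset n X \<theta> j y) = Max ((\<lambda>v. Max ((\<lambda>z. Tval n \<theta> j \<gamma> z) ` FF v)) ` S)"
      unfolding Fj by (rule Max_UN_fin[OF fS Sne fF]) (auto simp: S_def)
    also have "\<dots> = Max ((\<lambda>v. \<gamma> (j, v) + \<Phi> v \<gamma>) ` S)"
    proof (intro arg_cong[where f=Max] image_cong refl)
      fix v assume v: "v \<in> S"
      have "(\<lambda>z. Tval n \<theta> j \<gamma> z) ` FF v = (\<lambda>z. Tval n \<theta> (Suc j) \<gamma> z + \<gamma> (j, v)) ` FF v"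
        by (intro image_cong refl) (auto simp: Tval_split[OF jn] FF_iff)
      also have "Max \<dots> = \<Phi> v \<gamma> + \<gamma> (j, v)"
        unfolding \<Phi>_def using fF v by (intro Max_add_commute) (auto simp: S_def)
      finally show "Max ((\<lambda>z. Tval n \<theta> j \<gamma> z) ` FF v) = \<gamma> (j, v) + \<Phi> v \<gamma>" by simp
    qed
    finally show ?thesis .
  qed
  have Uj: "U n X \<theta> j y = ereal (\<integral>\<gamma>. Max ((\<lambda>v. \<gamma> (j, v) + \<Phi> v \<gamma>) ` S) \<partial>GM I)"
    using Fne by (simp add: U_alt decomp I_def)
  have USuc: "U n X \<theta> (Suc j) (y(j := v)) = (if v \<in> S then ereal (a v) else -\<infinity>)" if "v \<in> X j" for v
    using that by (simp add: U_alt S_def FF_def[symmetric] a_def \<Phi>_def I_def)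
  have "(\<Sum>v\<in>X j. expo (U n X \<theta> (Suc j) (y(j := v)))) = (\<Sum>v\<in>S. exp (a v))"
    using fin[OF jn]
    by (intro sum.mono_neutral_cong_right) (auto simp: USuc S_def)
  also have "\<dots> \<le> exp (\<integral>\<gamma>. Max ((\<lambda>v. \<gamma> (j, v) + \<Phi> v \<gamma>) ` S) \<partial>GM I)"
  proof -
    have inj: "inj_on (\<lambda>v. (j, v)) S" by (auto simp: inj_on_def)
    have "ln (\<Sum>v\<in>S. exp (a v)) \<le> (\<integral>\<gamma>. Max ((\<lambda>v. \<gamma> (j, v) + a v) ` S) \<partial>GM I)"
      using cK KI by (intro gumbel_max(2)[OF fI fS Sne inj]) auto
    also have "\<dots> \<le> (\<integral>\<gamma>. Max ((\<lambda>v. \<gamma> (j, v) + \<Phi> v \<gamma>) ` S) \<partial>GM I)"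
      using max_indep[OF fI fS Sne cK KJ KI JI \<Phi>m \<Phi>i] by (simp only: \<Phi>r a_def)
    finally have le: "ln (\<Sum>v\<in>S. exp (a v)) \<le> (\<integral>\<gamma>. Max ((\<lambda>v. \<gamma> (j, v) + \<Phi> v \<gamma>) ` S) \<partial>GM I)" .
    have pos: "(\<Sum>v\<in>S. exp (a v)) > 0" using fS Sne by (intro sum_pos) auto
    have "exp (ln (\<Sum>v\<in>S. exp (a v))) \<le> exp (\<integral>\<gamma>. Max ((\<lambda>v. \<gamma> (j, v) + \<Phi> v \<gamma>) ` S) \<partial>GM I)"
      using le by (simp only: exp_le_cancel_iff)
    then show ?thesis by (simp only: exp_ln[OF pos])
  qed
  also have "\<dots> = expo (U n X \<theta> j y)" by (simp add: Uj)
  finally show ?thesis .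
qed

lemma U_cases: "U n X \<theta> j y = -\<infinity> \<or> (\<exists>r. U n X \<theta> j y = ereal r)"
  by (simp add: U_alt)

lemma U_minf_iff: "U n X \<theta> j y = -\<infinity> \<longleftrightarrow> Fset n X \<theta> j y = {}"
  by (simp add: U_alt)

lemma expo_U_pos: "U n X \<theta> j y \<noteq> -\<infinity> \<Longrightarrow> expo (U n X \<theta> j y) > 0"
  using U_cases[of n X \<theta> j y] by auto

lemma expo_U_zero: "expo (U n X \<theta> j y) = 0 \<Longrightarrow> U n X \<theta> j y = -\<infinity>"
  using U_cases[of n X \<theta> j y] by auto

lemma pj_nonneg: "0 \<le> pj n X \<theta> j y v"
  by (simp add: pj_def expo_nonneg)

lemma pj_sum_le:
  assumes fin: "\<And>i. i < n \<Longrightarrow> finite (X i)" and jn: "j < n"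
  shows "(\<Sum>v\<in>X j. pj n X \<theta> j y v) \<le> 1"
proof (cases "U n X \<theta> j y = -\<infinity>")
  case True
  then show ?thesis by (simp add: pj_def)
next
  case False
  have pos: "expo (U n X \<theta> j y) > 0" by (rule expo_U_pos[OF False])
  have Fne: "Fset n X \<theta> j y \<noteq> {}" using False by (simp add: U_minf_iff)
  have "(\<Sum>v\<in>X j. pj n X \<theta> j y v) = (\<Sum>v\<in>X j. expo (U n X \<theta> (Suc j) (y(j := v)))) / expo (U n X \<theta> j y)"
    by (simp add: pj_def sum_divide_distrib)
  also have "\<dots> \<le> 1"
    using step_bound[OF fin jn Fne] pos by simp
  finally show ?thesis .
qed

definition fstep where
  "fstep n X \<theta> j y = (\<lambda>w. case w of
       None \<Rightarrow> 1 - (\<Sum>v\<in>X j. pj n X \<theta> j y v)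
     | Some v \<Rightarrow> (if v \<in> X j then pj n X \<theta> j y v else 0))"

lemma fstep_nonneg:
  assumes fin: "\<And>i. i < n \<Longrightarrow> finite (X i)" and jn: "j < n"
  shows "0 \<le> fstep n X \<theta> j y w"
  using pj_sum_le[where n=n and X=X and \<theta>=\<theta> and y=y, OF fin jn] pj_nonneg
  by (auto simp: fstep_def split: option.split)

lemma fstep_sum:
  assumes fin: "\<And>i. i < n \<Longrightarrow> finite (X i)" and jn: "j < n"
  shows "(\<integral>\<^sup>+w. ennreal (fstep n X \<theta> j y w) \<partial>count_space UNIV) = 1"
proof -
  let ?A = "insert None (Some ` X j)"
  have fA: "finite ?A" using fin[OF jn] by simp
  have "(\<integral>\<^sup>+w. ennreal (fstep n X \<theta> j y w) \<partial>count_space UNIV) = (\<Sum>w\<in>?A. ennreal (fstep n X \<theta> j y w))"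
    by (rule nn_integral_count_space'[OF fA]) (auto simp: fstep_def split: option.split)
  also have "\<dots> = ennreal (\<Sum>w\<in>?A. fstep n X \<theta> j y w)"
    by (rule sum_ennreal) (rule fstep_nonneg[where n=n and X=X, OF fin jn])
  also have "(\<Sum>w\<in>?A. fstep n X \<theta> j y w) = fstep n X \<theta> j y None + (\<Sum>w\<in>Some ` X j. fstep n X \<theta> j y w)"
    using fin[OF jn] by (subst sum.insert) auto
  also have "(\<Sum>w\<in>Some ` X j. fstep n X \<theta> j y w) = (\<Sum>v\<in>X j. pj n X \<theta> j y v)"
    by (subst sum.reindex) (auto simp: fstep_def)
  finally show ?thesis by (simp add: fstep_def)
qed

lemma step_pmf_eq: "step_pmf n X \<theta> j y = embed_pmf (fstep n X \<theta> j y)"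
  by (simp add: step_pmf_def fstep_def)

lemma pmf_step:
  assumes fin: "\<And>i. i < n \<Longrightarrow> finite (X i)" and jn: "j < n"
  shows "pmf (step_pmf n X \<theta> j y) w = fstep n X \<theta> j y w"
  unfolding step_pmf_eq
  by (rule pmf_embed_pmf[OF fstep_nonneg[where n=n and X=X, OF fin jn] fstep_sum[where n=n and X=X, OF fin jn]])

lemma set_step:
  assumes fin: "\<And>i. i < n \<Longrightarrow> finite (X i)" and jn: "j < n"
  shows "set_pmf (step_pmf n X \<theta> j y) \<subseteq> insert None (Some ` X j)"
proof
  fix w assume "w \<in> set_pmf (step_pmf n X \<theta> j y)"
  then have "pmf (step_pmf n X \<theta> j y) w \<noteq> 0" by (simp add: set_pmf_eq)
  then show "w \<in> insert None (Some ` X j)"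
    by (cases w) (auto simp: pmf_step[where n=n and X=X, OF fin jn] fstep_def split: if_splits)
qed

lemma pass_set:
  assumes fin: "\<And>i. i < n \<Longrightarrow> finite (X i)"
  shows "j + k = n \<Longrightarrow> set_pmf (pass_from n X \<theta> k j y) \<subseteq>
     insert None (Some ` {z. (\<forall>i. (i < j \<or> n \<le> i) \<longrightarrow> z i = y i) \<and> (\<forall>i. j \<le> i \<and> i < n \<longrightarrow> z i \<in> X i)})"
proof (induction k arbitrary: j y)
  case 0
  then show ?case by auto
next
  case (Suc k)
  have jn: "j < n" using Suc.prems by simp
  show ?case
  proof
    fix r assume r: "r \<in> set_pmf (pass_from n X \<theta> (Suc k) j y)"
    then obtain w where w: "w \<in> set_pmf (step_pmf n X \<theta> j y)"
      and r': "r \<in> set_pmf (case w of None \<Rightarrow> return_pmf None | Some v \<Rightarrow> pass_from n X \<theta> k (Suc j) (y(j := v)))"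
      by auto
    show "r \<in> insert None (Some ` {z. (\<forall>i. (i < j \<or> n \<le> i) \<longrightarrow> z i = y i) \<and> (\<forall>i. j \<le> i \<and> i < n \<longrightarrow> z i \<in> X i)})"
    proof (cases w)
      case None
      then show ?thesis using r' by simp
    next
      case (Some v)
      have v: "v \<in> X j" using w Some set_step[where n=n and X=X, OF fin jn] by auto
      have "r \<in> insert None (Some ` {z. (\<forall>i. (i < Suc j \<or> n \<le> i) \<longrightarrow> z i = (y(j := v)) i) \<and> (\<forall>i. Suc j \<le> i \<and> i < n \<longrightarrow> z i \<in> X i)})"
      proof -
        have jk: "Suc j + k = n" using Suc.prems by simp
        have rr: "r \<in> set_pmf (pass_from n X \<theta> k (Suc j) (y(j := v)))"
          using r' Some by (simp only: option.simps)
        show ?thesis by (rule subsetD[OF Suc.IH[of "Suc j" "y(j := v)", OF jk] rr])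
      qed
      then show ?thesis
      proof (rule insertE)
        assume "r \<in> Some ` {z. (\<forall>i. (i < Suc j \<or> n \<le> i) \<longrightarrow> z i = (y(j := v)) i) \<and> (\<forall>i. Suc j \<le> i \<and> i < n \<longrightarrow> z i \<in> X i)}"
        then obtain z where rz: "r = Some z" and z1: "\<forall>i. (i < Suc j \<or> n \<le> i) \<longrightarrow> z i = (y(j := v)) i"
          and z2: "\<forall>i. Suc j \<le> i \<and> i < n \<longrightarrow> z i \<in> X i" by auto
        have "(\<forall>i. (i < j \<or> n \<le> i) \<longrightarrow> z i = y i)"
          using z1 jn by auto
        moreover have "\<forall>i. j \<le> i \<and> i < n \<longrightarrow> z i \<in> X i"
        proof (intro allI impI)
          fix i assume i: "j \<le> i \<and> i < n"
          show "z i \<in> X i"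
          proof (cases "i = j")
            case True then show ?thesis using z1 v by auto
          next
            case False then show ?thesis using z2 i by auto
          qed
        qed
        ultimately show ?thesis using rz by auto
      qed simp
    qed
  qed
qed

lemma U_n:
  assumes x: "x \<in> PiE {..<n} X" and ni: "\<theta> x \<noteq> \<infinity>"
  shows "expo (U n X \<theta> n x) = expo (\<theta> x)"
proof -
  interpret P: prob_space "GM (gidx n X)" by (rule prob_space_GM)
  have F: "Fset n X \<theta> n x = (if \<theta> x = -\<infinity> then {} else {x})"
  proof -
    have "z \<in> completions n X n x \<longleftrightarrow> z = x" for z
    proof
      assume z: "z \<in> completions n X n x"
      then show "z = x" using x by (intro PiE_ext[of z "{..<n}" X x]) (auto simp: completions_def)
    qed (use x in \<open>auto simp: completions_def\<close>)
    then show ?thesis by (auto simp: Fset_def)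
  qed
  show ?thesis
  proof (cases "\<theta> x = -\<infinity>")
    case True
    then show ?thesis by (simp add: U_alt F)
  next
    case False
    then obtain r where r: "\<theta> x = ereal r" using ni by (cases "\<theta> x") auto
    have "U n X \<theta> n x = ereal (\<integral>\<gamma>. r \<partial>GM (gidx n X))"
      using False by (simp add: U_alt F Tval_def r)
    also have "\<dots> = ereal r" using P.prob_space by simp
    finally show ?thesis by (simp add: r)
  qed
qed

lemma pass_pmf:
  assumes fin: "\<And>i. i < n \<Longrightarrow> finite (X i)"
    and not_inf: "\<And>x. x \<in> PiE {..<n} X \<Longrightarrow> \<theta> x \<noteq> \<infinity>"
    and x: "x \<in> PiE {..<n} X"
  shows "j + k = n \<Longrightarrow> (\<forall>i. n \<le> i \<longrightarrow> y i = undefined) \<Longrightarrow> (\<forall>i<j. x i = y i) \<Longrightarrow>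
     pmf (pass_from n X \<theta> k j y) (Some x) * expo (U n X \<theta> j y) = expo (\<theta> x)"
proof (induction k arbitrary: j y)
  case 0
  then have jn: "j = n" by simp
  have xy: "x = y"
  proof
    fix i show "x i = y i"
    proof (cases "i < n")
      case True then show ?thesis using 0 jn by auto
    next
      case False then show ?thesis using 0 x by (auto simp: PiE_def extensional_def)
    qed
  qed
  show ?case using U_n[where \<theta>=\<theta>, OF x not_inf[OF x]] by (simp add: jn xy)
next
  case (Suc k)
  have jn: "j < n" using Suc.prems by simp
  have xj: "x j \<in> X j" using x jn by (auto simp: PiE_def)
  define f where "f w = (case w of None \<Rightarrow> return_pmf None | Some v \<Rightarrow> pass_from n X \<theta> k (Suc j) (y(j := v)))" for w
  have f0: "pmf (f w) (Some x) = 0" if "w \<noteq> Some (x j)" for w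
  proof (cases w)
    case None then show ?thesis by (simp add: f_def)
  next
    case (Some v)
    with that have vx: "v \<noteq> x j" by simp
    have jk: "Suc j + k = n" using Suc.prems by simp
    have "Some x \<notin> set_pmf (pass_from n X \<theta> k (Suc j) (y(j := v)))"
    proof
      assume "Some x \<in> set_pmf (pass_from n X \<theta> k (Suc j) (y(j := v)))"
      then have "Some x \<in> insert None (Some ` {z. (\<forall>i. (i < Suc j \<or> n \<le> i) \<longrightarrow> z i = (y(j := v)) i) \<and> (\<forall>i. Suc j \<le> i \<and> i < n \<longrightarrow> z i \<in> X i)})"
        using pass_set[where n=n and X=X, OF fin jk] by blast
      then have "x j = (y(j := v)) j" by auto
      then show False using vx by simp
    qed
    then show ?thesis by (simp add: Some f_def set_pmf_eq)
  qed
  have "pmf (pass_from n X \<theta> (Suc k) j y) (Some x) = (\<integral>w. pmf (f w) (Some x) \<partial>measure_pmf (step_pmf n X \<theta> j y))"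
    by (simp add: pmf_bind f_def)
  also have "\<dots> = (\<Sum>w\<in>{Some (x j)}. pmf (step_pmf n X \<theta> j y) w *\<^sub>R pmf (f w) (Some x))"
    by (rule integral_measure_pmf) (use f0 in auto)
  also have "\<dots> = pj n X \<theta> j y (x j) * pmf (pass_from n X \<theta> k (Suc j) (y(j := x j))) (Some x)"
    using xj by (simp add: pmf_step[where n=n and X=X, OF fin jn] fstep_def f_def)
  finally have eq: "pmf (pass_from n X \<theta> (Suc k) j y) (Some x) =
      pj n X \<theta> j y (x j) * pmf (pass_from n X \<theta> k (Suc j) (y(j := x j))) (Some x)" .
  have IH: "pmf (pass_from n X \<theta> k (Suc j) (y(j := x j))) (Some x) * expo (U n X \<theta> (Suc j) (y(j := x j))) = expo (\<theta> x)"
    using Suc.prems jn by (intro Suc.IH) (auto simp: less_Suc_eq)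
  show ?case
  proof (cases "U n X \<theta> j y = -\<infinity>")
    case True
    then have "Fset n X \<theta> j y = {}" by (simp add: U_minf_iff)
    moreover have "x \<in> completions n X j y" using x Suc.prems by (auto simp: completions_def)
    ultimately have "\<theta> x = -\<infinity>" by (auto simp: Fset_def)
    then show ?thesis using True by simp
  next
    case False
    have pos: "expo (U n X \<theta> j y) > 0" by (rule expo_U_pos[OF False])
    have "pmf (pass_from n X \<theta> (Suc k) j y) (Some x) * expo (U n X \<theta> j y)
        = pmf (pass_from n X \<theta> k (Suc j) (y(j := x j))) (Some x) * expo (U n X \<theta> (Suc j) (y(j := x j)))"
      unfolding eq pj_def using pos by (simp add: field_simps)
    then show ?thesis using IH by simp
  qed
qed

theorem theorem3:
  fixes n :: nat and X :: "nat \<Rightarrow> 'a set" and \<theta> :: "(nat \<Rightarrow> 'a) \<Rightarrow> ereal"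
  assumes fin: "\<And>i. i < n \<Longrightarrow> finite (X i)"
    and not_inf: "\<And>x. x \<in> PiE {..<n} X \<Longrightarrow> \<theta> x \<noteq> \<infinity>"
    and Zpos: "(\<Sum>x\<in>PiE {..<n} X. expo (\<theta> x)) > 0"
  shows "(\<forall>j<n. \<forall>y. U n X \<theta> j y \<noteq> -\<infinity> \<longrightarrow>
            (\<forall>v\<in>X j. 0 \<le> pj n X \<theta> j y v) \<and> (\<Sum>v\<in>X j. pj n X \<theta> j y v) \<le> 1)
       \<and> (\<forall>x\<in>PiE {..<n} X.
            measure_pmf.prob (pass n X \<theta>) {Some x} / measure_pmf.prob (pass n X \<theta>) (range Some)
            = expo (\<theta> x) / (\<Sum>x'\<in>PiE {..<n} X. expo (\<theta> x')))"
proof (intro conjI)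
  show "\<forall>j<n. \<forall>y. U n X \<theta> j y \<noteq> -\<infinity> \<longrightarrow>
            (\<forall>v\<in>X j. 0 \<le> pj n X \<theta> j y v) \<and> (\<Sum>v\<in>X j. pj n X \<theta> j y v) \<le> 1"
  proof (intro allI impI conjI ballI)
    fix j y v
    show "0 \<le> pj n X \<theta> j y v" by (rule pj_nonneg)
  next
    fix j y assume jn: "j < n"
    show "(\<Sum>v\<in>X j. pj n X \<theta> j y v) \<le> 1"
      using fin jn by (rule pj_sum_le[where n=n and X=X and j=j and \<theta>=\<theta> and y=y])
  qed
  define y0 where "y0 = (\<lambda>_::nat. undefined :: 'a)"
  define p where "p = pass n X \<theta>"
  have p_def': "p = pass_from n X \<theta> n 0 y0" by (simp add: p_def pass_def y0_def)
  define E0 where "E0 = expo (U n X \<theta> 0 y0)"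
  define Z where "Z = (\<Sum>x'\<in>PiE {..<n} X. expo (\<theta> x'))"
  have finPi: "finite (PiE {..<n} X)" using fin by (intro finite_PiE) auto
  have E0pos: "E0 > 0"
  proof -
    obtain x0 where x0: "x0 \<in> PiE {..<n} X" "expo (\<theta> x0) \<noteq> 0"
    proof (rule ccontr)
      assume "\<not> thesis"
      then have "\<forall>x\<in>PiE {..<n} X. expo (\<theta> x) = 0" using that by blast
      then have "(\<Sum>x\<in>PiE {..<n} X. expo (\<theta> x)) = 0" by simp
      then show False using Zpos by simp
    qed
    have "\<theta> x0 \<noteq> -\<infinity>" using x0(2) by auto
    then have "x0 \<in> Fset n X \<theta> 0 y0" using x0(1) by (simp add: Fset_def completions_def)
    then have "U n X \<theta> 0 y0 \<noteq> -\<infinity>" by (auto simp: U_minf_iff)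
    then show ?thesis unfolding E0_def by (rule expo_U_pos)
  qed
  have pmfx: "pmf p (Some x) = expo (\<theta> x) / E0" if x: "x \<in> PiE {..<n} X" for x
  proof -
    have "pmf p (Some x) * E0 = expo (\<theta> x)"
      unfolding p_def' E0_def
      using pass_pmf[where n=n and X=X and \<theta>=\<theta> and j=0 and k=n and y=y0, OF fin not_inf x] by (simp add: y0_def)
    then show ?thesis using E0pos by (simp add: field_simps)
  qed
  have setp: "set_pmf p \<subseteq> insert None (Some ` PiE {..<n} X)"
  proof -
    have "set_pmf p \<subseteq> insert None (Some ` {z. (\<forall>i. (i < 0 \<or> n \<le> i) \<longrightarrow> z i = y0 i) \<and> (\<forall>i. 0 \<le> i \<and> i < n \<longrightarrow> z i \<in> X i)})"
      unfolding p_def' using pass_set[where n=n and X=X and \<theta>=\<theta> and j=0 and k=n and y=y0, OF fin] by simp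
    also have "{z. (\<forall>i. (i < 0 \<or> n \<le> i) \<longrightarrow> z i = y0 i) \<and> (\<forall>i. 0 \<le> i \<and> i < n \<longrightarrow> z i \<in> X i)} \<subseteq> PiE {..<n} X"
      by (auto simp: PiE_def extensional_def y0_def)
    finally show ?thesis by blast
  qed
  have probR: "measure_pmf.prob p (range Some) = (\<Sum>x\<in>PiE {..<n} X. pmf p (Some x))"
  proof -
    have "measure_pmf.prob p (range Some) = measure_pmf.prob p (range Some \<inter> set_pmf p)"
      by (simp add: measure_Int_set_pmf)
    also have "range Some \<inter> set_pmf p = Some ` PiE {..<n} X \<inter> set_pmf p"
      using setp by auto
    also have "measure_pmf.prob p \<dots> = measure_pmf.prob p (Some ` PiE {..<n} X)"
      by (simp add: measure_Int_set_pmf)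
    also have "\<dots> = (\<Sum>w\<in>Some ` PiE {..<n} X. pmf p w)"
      using finPi by (simp add: measure_measure_pmf_finite)
    also have "\<dots> = (\<Sum>x\<in>PiE {..<n} X. pmf p (Some x))"
      by (simp add: sum.reindex)
    finally show ?thesis .
  qed
  show "\<forall>x\<in>PiE {..<n} X.
            measure_pmf.prob (pass n X \<theta>) {Some x} / measure_pmf.prob (pass n X \<theta>) (range Some)
            = expo (\<theta> x) / (\<Sum>x'\<in>PiE {..<n} X. expo (\<theta> x'))"
  proof
    fix x assume x: "x \<in> PiE {..<n} X"
    have pa: "measure_pmf.prob p {Some x} = expo (\<theta> x) / E0"
      using pmfx[OF x] by (simp add: measure_pmf_single)
    have pb: "measure_pmf.prob p (range Some) = Z / E0"
      unfolding probR Z_def by (simp add: pmfx sum_divide_distrib)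
    have "measure_pmf.prob p {Some x} / measure_pmf.prob p (range Some) = (expo (\<theta> x) / E0) / (Z / E0)"
      by (simp only: pa pb)
    also have "\<dots> = expo (\<theta> x) / Z"
      using E0pos by (simp add: field_simps)
    finally have "measure_pmf.prob p {Some x} / measure_pmf.prob p (range Some) = expo (\<theta> x) / Z" .
    then show "measure_pmf.prob (pass n X \<theta>) {Some x} / measure_pmf.prob (pass n X \<theta>) (range Some)
            = expo (\<theta> x) / (\<Sum>x'\<in>PiE {..<n} X. expo (\<theta> x'))"
      by (simp add: p_def Z_def)
  qed
qed

end
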